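(* Let $H=T\cup C_n$ be a Halin graph whose outer cycle $C_n$ has even length $n$. Then $AT(H)=3$.
   Context: All graphs are finite and simple. A Halin graph $H=T\cup C_n$ is a plane graph obtained from a plane tree $T$ having no vertex of degree two and at least one vertex of degree at least three, by adding a cycle $C_n$ (the outer cycle) that connects all the leaves of $T$ in the cyclic order determined by the planar drawing of $T$. For a digraph $D$, an Eulerian subdigraph is a spanning subdigraph (a subset of the arcs, possibly empty) in which every vertex has indegree equal to outdegree; it is even or odd according to the parity of its number of arcs. The Alon–Tarsi number $AT(G)$ is the smallest integer $k$ such that $G$ has an orientation $D$ with maximum outdegree at most $k-1$ for which the numbers of even and odd Eulerian subdigraphs of $D$ differ. *)

theory Defs
  imports Main
begin

definition simple_graph :: "'a set \<Rightarrow> 'a set set \<Rightarrow> bool" where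
  "simple_graph V E \<longleftrightarrow> finite V \<and> (\<forall>e\<in>E. \<exists>u v. e = {u, v} \<and> u \<noteq> v \<and> u \<in> V \<and> v \<in> V)"

definition nbrs :: "'a set set \<Rightarrow> 'a \<Rightarrow> 'a set" where
  "nbrs E v = {u. {v, u} \<in> E}"

definition degree :: "'a set set \<Rightarrow> 'a \<Rightarrow> nat" where
  "degree E v = card (nbrs E v)"

definition adj_rel :: "'a set set \<Rightarrow> ('a \<times> 'a) set" where
  "adj_rel E = {(u, v). {u, v} \<in> E}"

definition connected_graph :: "'a set \<Rightarrow> 'a set set \<Rightarrow> bool" where
  "connected_graph V E \<longleftrightarrow> (\<forall>u\<in>V. \<forall>v\<in>V. (u, v) \<in> (adj_rel E)\<^sup>*)"

definition is_tree :: "'a set \<Rightarrow> 'a set set \<Rightarrow> bool" where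
  "is_tree V E \<longleftrightarrow> simple_graph V E \<and> V \<noteq> {} \<and> connected_graph V E \<and> card E = card V - 1"

definition leaves :: "'a set \<Rightarrow> 'a set set \<Rightarrow> 'a set" where
  "leaves V E = {v \<in> V. degree E v = 1}"

text \<open>A planar drawing of a tree is determined (up to homeomorphism) by a rotation system:
  at every vertex v a cyclic permutation rot v of the neighbours of v.\<close>

definition rotation_system :: "'a set \<Rightarrow> 'a set set \<Rightarrow> ('a \<Rightarrow> 'a \<Rightarrow> 'a) \<Rightarrow> bool" where
  "rotation_system V E rot \<longleftrightarrow>
     (\<forall>v\<in>V. bij_betw (rot v) (nbrs E v) (nbrs E v) \<and>
             (\<forall>u\<in>nbrs E v. \<forall>w\<in>nbrs E v. \<exists>k. (rot v ^^ k) u = w))"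

text \<open>Face-tracing successor on darts (u,v): continue from v along the next edge in the rotation at v.
  Since a plane tree has a single face, iterating this traces the boundary of the drawing.\<close>

definition face_succ :: "('a \<Rightarrow> 'a \<Rightarrow> 'a) \<Rightarrow> 'a \<times> 'a \<Rightarrow> 'a \<times> 'a" where
  "face_succ rot d = (snd d, rot (snd d) (fst d))"

text \<open>Leaf m is the next leaf after leaf l in the cyclic order given by the drawing:
  it is the first leaf reached by the boundary walk starting with the dart leaving l.\<close>

definition next_leaf :: "'a set \<Rightarrow> 'a set set \<Rightarrow> ('a \<Rightarrow> 'a \<Rightarrow> 'a) \<Rightarrow> 'a \<Rightarrow> 'a \<Rightarrow> bool" where
  "next_leaf V E rot l m \<longleftrightarrow> l \<in> leaves V E \<and>
     (\<exists>u k. nbrs E l = {u} \<and> snd ((face_succ rot ^^ k) (l, u)) = m \<and> m \<in> leaves V E \<and>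
            (\<forall>j<k. snd ((face_succ rot ^^ j) (l, u)) \<notin> leaves V E))"

definition outer_cycle_edges :: "'a set \<Rightarrow> 'a set set \<Rightarrow> ('a \<Rightarrow> 'a \<Rightarrow> 'a) \<Rightarrow> 'a set set" where
  "outer_cycle_edges V E rot = {{l, m} | l m. next_leaf V E rot l m}"

definition halin_tree :: "'a set \<Rightarrow> 'a set set \<Rightarrow> ('a \<Rightarrow> 'a \<Rightarrow> 'a) \<Rightarrow> bool" where
  "halin_tree V T rot \<longleftrightarrow> is_tree V T \<and> rotation_system V T rot \<and>
     (\<forall>v\<in>V. degree T v \<noteq> 2) \<and> (\<exists>v\<in>V. degree T v \<ge> 3)"

definition halin_edges :: "'a set \<Rightarrow> 'a set set \<Rightarrow> ('a \<Rightarrow> 'a \<Rightarrow> 'a) \<Rightarrow> 'a set set" where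
  "halin_edges V T rot = T \<union> outer_cycle_edges V T rot"

definition orientation :: "'a set \<Rightarrow> 'a set set \<Rightarrow> ('a \<times> 'a) set \<Rightarrow> bool" where
  "orientation V E D \<longleftrightarrow> (\<forall>(u, v)\<in>D. {u, v} \<in> E) \<and>
     (\<forall>u v. {u, v} \<in> E \<longrightarrow> ((u, v) \<in> D \<longleftrightarrow> (v, u) \<notin> D))"

definition outdeg :: "('a \<times> 'a) set \<Rightarrow> 'a \<Rightarrow> nat" where
  "outdeg D v = card {w. (v, w) \<in> D}"

definition indeg :: "('a \<times> 'a) set \<Rightarrow> 'a \<Rightarrow> nat" where
  "indeg D v = card {w. (w, v) \<in> D}"

definition eulerian_sub :: "('a \<times> 'a) set \<Rightarrow> ('a \<times> 'a) set \<Rightarrow> bool" where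
  "eulerian_sub D S \<longleftrightarrow> S \<subseteq> D \<and> (\<forall>v. indeg S v = outdeg S v)"

definition even_eulerian :: "('a \<times> 'a) set \<Rightarrow> nat" where
  "even_eulerian D = card {S. eulerian_sub D S \<and> even (card S)}"

definition odd_eulerian :: "('a \<times> 'a) set \<Rightarrow> nat" where
  "odd_eulerian D = card {S. eulerian_sub D S \<and> odd (card S)}"

definition AT_number :: "'a set \<Rightarrow> 'a set set \<Rightarrow> nat" where
  "AT_number V E = (LEAST k. \<exists>D. orientation V E D \<and> (\<forall>v\<in>V. outdeg D v + 1 \<le> k) \<and>
                                even_eulerian D \<noteq> odd_eulerian D)"

end

theory Submission
  imports Defs
begin


definition darts :: "'a set set \<Rightarrow> ('a \<times> 'a) set" where
  "darts T = {(x, y). {x, y} \<in> T}"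

lemma sg_edgeE: "simple_graph V T \<Longrightarrow> e \<in> T \<Longrightarrow> \<exists>u v. e = {u, v} \<and> u \<noteq> v \<and> u \<in> V \<and> v \<in> V"
  unfolding simple_graph_def by blast

lemma sg_edge: "simple_graph V T \<Longrightarrow> {x, y} \<in> T \<Longrightarrow> x \<noteq> y \<and> x \<in> V \<and> y \<in> V"
proof -
  assume a: "simple_graph V T" "{x, y} \<in> T"
  then obtain u v where uv: "{x, y} = {u, v}" "u \<noteq> v" "u \<in> V" "v \<in> V"
    using sg_edgeE by blast
  from uv(1) have "(x = u \<and> y = v) \<or> (x = v \<and> y = u)" by (simp add: doubleton_eq_iff)
  then show ?thesis using uv by blast
qed

lemma sg_finV: "simple_graph V T \<Longrightarrow> finite V"
  unfolding simple_graph_def by blast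

lemma sg_finite_E: "simple_graph V T \<Longrightarrow> finite T"
proof -
  assume a: "simple_graph V T"
  have "T \<subseteq> Pow V"
  proof
    fix e assume "e \<in> T"
    then obtain u v where "e = {u, v}" "u \<in> V" "v \<in> V" using sg_edgeE[OF a] by blast
    then show "e \<in> Pow V" by simp
  qed
  moreover have "finite (Pow V)" using sg_finV[OF a] by simp
  ultimately show ?thesis by (rule finite_subset)
qed

lemma nbrs_sub: "simple_graph V T \<Longrightarrow> nbrs T v \<subseteq> V"
proof
  fix x assume "simple_graph V T" "x \<in> nbrs T v"
  then show "x \<in> V" unfolding nbrs_def using sg_edge by fastforce
qed

lemma nbrs_sym: "x \<in> nbrs T y \<longleftrightarrow> y \<in> nbrs T x"
  unfolding nbrs_def by (simp add: insert_commute)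

lemma nbrs_finite: "simple_graph V T \<Longrightarrow> finite (nbrs T v)"
  by (rule finite_subset[OF nbrs_sub sg_finV])

lemma darts_sigma: "simple_graph V T \<Longrightarrow> darts T = Sigma V (nbrs T)"
proof (intro set_eqI iffI)
  fix d assume a: "simple_graph V T" "d \<in> darts T"
  obtain x y where d: "d = (x, y)" by fastforce
  show "d \<in> Sigma V (nbrs T)" using a sg_edge[OF a(1)] unfolding d darts_def nbrs_def by simp
next
  fix d assume a: "d \<in> Sigma V (nbrs T)"
  obtain x y where d: "d = (x, y)" by fastforce
  show "d \<in> darts T" using a unfolding d darts_def nbrs_def by simp
qed


lemma card_darts: "simple_graph V T \<Longrightarrow> card (darts T) = 2 * card T"
proof -
  assume sg: "simple_graph V T"
  have fin: "finite T" using sg_finite_E[OF sg] .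
  have eq: "darts T = (\<Union>e\<in>T. {(x, y). {x, y} = e})"
    unfolding darts_def by blast
  have c2: "card {(x, y). {x, y} = e} = 2" if eT: "e \<in> T" for e
  proof -
    obtain a b where ab: "e = {a, b}" "a \<noteq> b" using sg_edgeE[OF sg eT] by blast
    have "{(x, y). {x, y} = e} = {(a, b), (b, a)}"
    proof (intro set_eqI iffI)
      fix d assume "d \<in> {(x, y). {x, y} = e}"
      then obtain x y where d: "d = (x, y)" "{x, y} = {a, b}" using ab by blast
      then show "d \<in> {(a, b), (b, a)}" by (simp add: doubleton_eq_iff)
    next
      fix d assume "d \<in> {(a, b), (b, a)}"
      then show "d \<in> {(x, y). {x, y} = e}" using ab by (auto simp: insert_commute)
    qed
    thus ?thesis using ab by simp
  qed
  have fin2: "finite {(x, y). {x, y} = e}" if "e \<in> T" for e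
  proof (rule card_ge_0_finite)
    show "card {(x, y). {x, y} = e} > 0" using c2[OF that] by simp
  qed
  have dj: "{(x, y). {x, y} = e1} \<inter> {(x, y). {x, y} = e2} = {}" if "e1 \<noteq> e2" for e1 e2
    using that by blast
  have "card (\<Union>e\<in>T. {(x, y). {x, y} = e}) = (\<Sum>e\<in>T. card {(x, y). {x, y} = e})"
    by (rule card_UN_disjoint[OF fin]) (auto simp: fin2 dj)
  also have "\<dots> = (\<Sum>e\<in>T. 2)" using c2 by simp
  finally show ?thesis using eq by simp
qed

lemma handshake: "simple_graph V T \<Longrightarrow> (\<Sum>v\<in>V. degree T v) = 2 * card T"
proof -
  assume sg: "simple_graph V T"
  have "card (darts T) = card (Sigma V (nbrs T))" using darts_sigma[OF sg] by simp
  also have "\<dots> = (\<Sum>v\<in>V. card (nbrs T v))"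
    by (rule card_SigmaI[OF sg_finV[OF sg]]) (simp add: nbrs_finite[OF sg])
  finally show ?thesis using card_darts[OF sg] unfolding degree_def by simp
qed

lemma adj_rel_iff: "(x, y) \<in> adj_rel T \<longleftrightarrow> y \<in> nbrs T x"
  unfolding adj_rel_def nbrs_def by simp

lemma closure2:
  assumes "nbrs T l = {u}" "nbrs T u = {l}" "(l, w) \<in> (adj_rel T)\<^sup>*"
  shows "w \<in> {l, u}"
  using assms(3)
proof (induction rule: rtrancl_induct)
  case base then show ?case by simp
next
  case (step y z) then show ?case using assms(1,2) by (auto simp: adj_rel_iff)
qed

lemma tree_sg: "is_tree V T \<Longrightarrow> simple_graph V T"
  unfolding is_tree_def by blast

lemma tree_conn: "is_tree V T \<Longrightarrow> x \<in> V \<Longrightarrow> y \<in> V \<Longrightarrow> (x, y) \<in> (adj_rel T)\<^sup>*"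
  unfolding is_tree_def connected_graph_def by blast

lemma tree_deg_pos:
  assumes t: "is_tree V T" and v: "v \<in> V" and c: "card V \<ge> 2"
  shows "degree T v \<ge> 1"
proof -
  have sg: "simple_graph V T" using t by (rule tree_sg)
  have fin: "finite V" using sg by (rule sg_finV)
  obtain w where w: "w \<in> V" "w \<noteq> v"
  proof -
    have "card (V - {v}) \<ge> 1" using c v fin by (simp add: card_Diff_singleton)
    then have "V - {v} \<noteq> {}" by (metis card.empty not_one_le_zero)
    then show ?thesis using that by blast
  qed
  have "(v, w) \<in> (adj_rel T)\<^sup>*" using tree_conn[OF t v w(1)] .
  then obtain z where "(v, z) \<in> adj_rel T" using w(2) by (metis converse_rtranclE)
  then have "z \<in> nbrs T v" by (simp add: adj_rel_iff)
  then have "nbrs T v \<noteq> {}" by blast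
  then show ?thesis unfolding degree_def using nbrs_finite[OF sg]
    by (simp add: Suc_leI card_gt_0_iff)
qed

lemma sum_split_leaves:
  assumes fin: "finite V" and L: "L \<subseteq> V"
  shows "(\<Sum>v\<in>V. f v) = (\<Sum>v\<in>L. f v) + (\<Sum>v\<in>V - L. f v)"
  using sum.subset_diff[OF L fin, of f] by (simp add: add.commute)

lemma tree_two_leaves:
  assumes t: "is_tree V T" and c: "card V \<ge> 2"
  shows "card (leaves V T) \<ge> 2"
proof -
  have sg: "simple_graph V T" using t by (rule tree_sg)
  have fin: "finite V" using sg by (rule sg_finV)
  let ?L = "leaves V T"
  have L: "?L \<subseteq> V" unfolding leaves_def by blast
  have hs: "(\<Sum>v\<in>V. degree T v) = 2 * card V - 2"
    using handshake[OF sg] t unfolding is_tree_def by simp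
  have s1: "(\<Sum>v\<in>?L. degree T v) = card ?L" unfolding leaves_def by simp
  have s2: "(\<Sum>v\<in>V - ?L. degree T v) \<ge> (\<Sum>v\<in>V - ?L. 2)"
  proof (rule sum_mono)
    fix v assume "v \<in> V - ?L"
    then have "degree T v \<noteq> 1" "v \<in> V" unfolding leaves_def by auto
    then show "2 \<le> degree T v" using tree_deg_pos[OF t _ c, of v] by linarith
  qed
  have cd: "card (V - ?L) = card V - card ?L" using L fin by (simp add: card_Diff_subset finite_subset)
  have cl: "card ?L \<le> card V" using L fin by (simp add: card_mono)
  have "2 * card V - 2 \<ge> card ?L + 2 * (card V - card ?L)"
    using hs s1 s2 cd sum_split_leaves[OF fin L, of "degree T"] by simp
  then show ?thesis using cl c by linarith
qed

lemma halin_three_leaves: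
  assumes h: "halin_tree V T rot"
  shows "card (leaves V T) \<ge> 3"
proof -
  have t: "is_tree V T" using h unfolding halin_tree_def by blast
  have sg: "simple_graph V T" using t by (rule tree_sg)
  have fin: "finite V" using sg by (rule sg_finV)
  obtain v0 where v0: "v0 \<in> V" "degree T v0 \<ge> 3" using h unfolding halin_tree_def by blast
  have "card (nbrs T v0) \<ge> 3" using v0 unfolding degree_def by simp
  moreover have "v0 \<notin> nbrs T v0" unfolding nbrs_def using sg_edge[OF sg] by fastforce
  moreover have "nbrs T v0 \<subseteq> V" by (rule nbrs_sub[OF sg])
  ultimately have "insert v0 (nbrs T v0) \<subseteq> V" "card (insert v0 (nbrs T v0)) \<ge> 4"
    using nbrs_finite[OF sg] v0 by auto
  then have c: "card V \<ge> 4" using fin by (meson card_mono le_trans)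
  let ?L = "leaves V T"
  have L: "?L \<subseteq> V" unfolding leaves_def by blast
  have hs: "(\<Sum>v\<in>V. degree T v) = 2 * card V - 2"
    using handshake[OF sg] t unfolding is_tree_def by simp
  have s1: "(\<Sum>v\<in>?L. degree T v) = card ?L" unfolding leaves_def by simp
  have s2: "(\<Sum>v\<in>V - ?L. degree T v) \<ge> (\<Sum>v\<in>V - ?L. 3)"
  proof (rule sum_mono)
    fix v assume a: "v \<in> V - ?L"
    then have "degree T v \<noteq> 2" using h unfolding halin_tree_def by blast
    moreover have "degree T v \<noteq> 1" "v \<in> V" using a unfolding leaves_def by auto
    ultimately show "3 \<le> degree T v" using tree_deg_pos[OF t _, of v] c by linarith
  qed
  have cd: "card (V - ?L) = card V - card ?L" using L fin by (simp add: card_Diff_subset finite_subset)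
  have cl: "card ?L \<le> card V" using L fin by (simp add: card_mono)
  have "2 * card V - 2 \<ge> card ?L + 3 * (card V - card ?L)"
    using hs s1 s2 cd sum_split_leaves[OF fin L, of "degree T"] by simp
  then show ?thesis using cl c by linarith
qed



lemma reach_comp: "(f ^^ a) x = y \<Longrightarrow> (f ^^ b) y = z \<Longrightarrow> (f ^^ (b + a)) x = z"
  by (simp add: funpow_add)

lemma leaf_nbr: "simple_graph V T \<Longrightarrow> l \<in> leaves V T \<Longrightarrow> \<exists>u. nbrs T l = {u}"
  unfolding leaves_def degree_def by (metis (mono_tags, lifting) card_1_singletonE mem_Collect_eq)

lemma nbr_edge: "u \<in> nbrs T l \<longleftrightarrow> {l, u} \<in> T"
  unfolding nbrs_def by simp

lemma rs_bij: "rotation_system V T rot \<Longrightarrow> v \<in> V \<Longrightarrow> bij_betw (rot v) (nbrs T v) (nbrs T v)"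
  unfolding rotation_system_def by blast

lemma rs_cyc: "rotation_system V T rot \<Longrightarrow> v \<in> V \<Longrightarrow> x \<in> nbrs T v \<Longrightarrow> w \<in> nbrs T v
   \<Longrightarrow> \<exists>k. (rot v ^^ k) x = w"
  unfolding rotation_system_def by blast

lemma rs_in: "rotation_system V T rot \<Longrightarrow> v \<in> V \<Longrightarrow> x \<in> nbrs T v \<Longrightarrow> rot v x \<in> nbrs T v"
  using rs_bij bij_betw_apply by metis

lemma fs_darts:
  assumes sg: "simple_graph V T" and rs: "rotation_system V T rot" and d: "d \<in> darts T"
  shows "face_succ rot d \<in> darts T"
proof -
  obtain x y where xy: "d = (x, y)" by fastforce
  have e: "{x, y} \<in> T" using d unfolding xy darts_def by simp
  have yV: "y \<in> V" using sg_edge[OF sg e] by blast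
  have "x \<in> nbrs T y" using e by (simp add: nbrs_def insert_commute)
  then have "rot y x \<in> nbrs T y" by (rule rs_in[OF rs yV])
  then show ?thesis unfolding xy face_succ_def darts_def nbrs_def by simp
qed

lemma fs_iter_darts:
  assumes sg: "simple_graph V T" and rs: "rotation_system V T rot" and d: "d \<in> darts T"
  shows "(face_succ rot ^^ k) d \<in> darts T"
  by (induction k) (auto intro: fs_darts[OF sg rs] simp: d)

lemma conn_remove:
  assumes l: "nbrs T l = {u}" and p: "(x, y) \<in> (adj_rel T)\<^sup>*" and x: "x \<noteq> l"
  shows "(y \<noteq> l \<longrightarrow> (x, y) \<in> (adj_rel (T - {{l, u}}))\<^sup>*) \<and> (y = l \<longrightarrow> (x, u) \<in> (adj_rel (T - {{l, u}}))\<^sup>*)"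
  using p
proof (induction rule: rtrancl_induct)
  case base then show ?case using x by simp
next
  case (step y z)
  have yz: "z \<in> nbrs T y" using step.hyps(2) by (simp add: adj_rel_iff)
  show ?case
  proof (cases "z = l")
    case True
    then have "y \<in> nbrs T l" using yz nbrs_sym by metis
    then have "y = u" using l by simp
    then show ?thesis using step.IH True l by auto
  next
    case zl: False
    show ?thesis
    proof (cases "y = l")
      case True
      then have "z = u" using yz l by simp
      then show ?thesis using step.IH True zl by simp
    next
      case False
      have "{y, z} \<noteq> {l, u}" using False zl by (auto simp: doubleton_eq_iff)
      then have "(y, z) \<in> adj_rel (T - {{l, u}})" using step.hyps(2) unfolding adj_rel_def by simp
      then show ?thesis using step.IH False zl by (meson rtrancl.rtrancl_into_rtrancl)
    qed
  qed
qed

lemma remove_leaf_tree: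
  assumes t: "is_tree V T" and lV: "l \<in> V" and l: "nbrs T l = {u}" and c: "card V \<ge> 2"
  shows "is_tree (V - {l}) (T - {{l, u}})"
proof -
  have sg: "simple_graph V T" using t by (rule tree_sg)
  have luT: "{l, u} \<in> T" using l nbr_edge by fastforce
  have uV: "u \<in> V" and ul: "u \<noteq> l" using sg_edge[OF sg luT] by auto
  have sg': "simple_graph (V - {l}) (T - {{l, u}})"
    unfolding simple_graph_def
  proof (intro conjI ballI)
    show "finite (V - {l})" using sg_finV[OF sg] by simp
  next
    fix e assume e: "e \<in> T - {{l, u}}"
    then obtain a b where ab: "e = {a, b}" "a \<noteq> b" "a \<in> V" "b \<in> V" using sg_edgeE[OF sg] by blast
    have "a \<noteq> l"
    proof
      assume "a = l"
      then have "b \<in> nbrs T l" using e ab nbr_edge by fastforce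
      then show False using l e ab \<open>a = l\<close> by simp
    qed
    moreover have "b \<noteq> l"
    proof
      assume "b = l"
      then have "a \<in> nbrs T l" using e ab nbr_edge by (metis DiffD1 insert_commute)
      then show False using l e ab \<open>b = l\<close> by (simp add: insert_commute)
    qed
    ultimately show "\<exists>a b. e = {a, b} \<and> a \<noteq> b \<and> a \<in> V - {l} \<and> b \<in> V - {l}" using ab by blast
  qed
  have ne: "V - {l} \<noteq> {}" using uV ul by blast
  have conn: "connected_graph (V - {l}) (T - {{l, u}})"
    unfolding connected_graph_def
  proof (intro ballI)
    fix x y assume x: "x \<in> V - {l}" and y: "y \<in> V - {l}"
    have "(x, y) \<in> (adj_rel T)\<^sup>*" using tree_conn[OF t] x y by blast
    then show "(x, y) \<in> (adj_rel (T - {{l, u}}))\<^sup>*" using conn_remove[OF l] x y by blast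
  qed
  have finT: "finite T" using sg_finite_E[OF sg] .
  have "card (T - {{l, u}}) = card T - 1" using luT finT by simp
  moreover have "card (V - {l}) = card V - 1" using lV sg_finV[OF sg] by simp
  moreover have "card T = card V - 1" using t unfolding is_tree_def by blast
  ultimately have "card (T - {{l, u}}) = card (V - {l}) - 1" using c by simp
  then show ?thesis unfolding is_tree_def using sg' ne conn by blast
qed



lemma nbrs_remove_other:
  assumes "v \<noteq> l" "v \<noteq> u" shows "nbrs (T - {{l, u}}) v = nbrs T v"
  unfolding nbrs_def using assms by (auto simp: doubleton_eq_iff)

lemma nbrs_remove_u:
  assumes "u \<noteq> l" shows "nbrs (T - {{l, u}}) u = nbrs T u - {l}"
  unfolding nbrs_def using assms by (auto simp: doubleton_eq_iff)

lemma rot_skip_cyc: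
  fixes r :: "'a \<Rightarrow> 'a" and l :: 'a
  defines "r' \<equiv> (\<lambda>x. if r x = l then r l else r x)"
  assumes rl: "r l \<noteq> l" and x: "x \<noteq> l"
  shows "\<exists>j. (r' ^^ j) x = (if (r ^^ k) x = l then (r ^^ Suc k) x else (r ^^ k) x)"
proof (induction k)
  case 0 then show ?case using x by (intro exI[of _ 0]) simp
next
  case (Suc k)
  then obtain j where j: "(r' ^^ j) x = (if (r ^^ k) x = l then (r ^^ Suc k) x else (r ^^ k) x)" by blast
  show ?case
  proof (cases "(r ^^ k) x = l")
    case True
    then have "(r ^^ Suc k) x = r l" by simp
    then have "(r ^^ Suc k) x \<noteq> l" using rl by simp
    then show ?thesis using j True by (intro exI[of _ j]) simp
  next
    case False
    then have jj: "(r' ^^ j) x = (r ^^ k) x" using j by simp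
    show ?thesis
    proof (cases "(r ^^ Suc k) x = l")
      case True
      have "(r' ^^ Suc j) x = r' ((r ^^ k) x)" using jj by simp
      also have "\<dots> = r l" using True unfolding r'_def by simp
      also have "\<dots> = (r ^^ Suc (Suc k)) x" using True by simp
      finally show ?thesis using True by (intro exI[of _ "Suc j"]) simp
    next
      case F2: False
      have "(r' ^^ Suc j) x = r' ((r ^^ k) x)" using jj by simp
      also have "\<dots> = (r ^^ Suc k) x" using F2 unfolding r'_def by simp
      finally show ?thesis using F2 by (intro exI[of _ "Suc j"]) simp
    qed
  qed
qed

lemma remove_leaf_rot:
  assumes rs: "rotation_system V T rot" and sg: "simple_graph V T" and lV: "l \<in> V"
    and l: "nbrs T l = {u}" and p0: "p0 \<in> nbrs T u" "p0 \<noteq> l"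
  shows "rotation_system (V - {l}) (T - {{l, u}}) (rot(u := (\<lambda>x. if rot u x = l then rot u l else rot u x)))"
proof -
  define r where "r = rot u"
  define r' where "r' = (\<lambda>x. if r x = l then r l else r x)"
  have luT: "{l, u} \<in> T" using l nbr_edge by fastforce
  have uV: "u \<in> V" and ul: "u \<noteq> l" using sg_edge[OF sg luT] by auto
  let ?N = "nbrs T u"
  have lN: "l \<in> ?N" using luT by (simp add: nbrs_def insert_commute)
  have bij: "bij_betw r ?N ?N" unfolding r_def by (rule rs_bij[OF rs uV])
  have rin: "r x \<in> ?N" if "x \<in> ?N" for x using bij that bij_betw_apply by metis
  have inj: "inj_on r ?N" using bij bij_betw_def by blast
  have rl: "r l \<noteq> l"
  proof
    assume a: "r l = l"
    obtain k where k: "(r ^^ k) l = p0" using rs_cyc[OF rs uV lN p0(1)] unfolding r_def by blast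
    have "(r ^^ k) l = l" for k by (induction k) (simp_all add: a)
    then show False using k p0(2) by simp
  qed
  have N'sub: "r' ` (?N - {l}) \<subseteq> ?N - {l}"
  proof
    fix y assume "y \<in> r' ` (?N - {l})"
    then obtain x where x: "x \<in> ?N - {l}" "y = r' x" by blast
    show "y \<in> ?N - {l}"
    proof (cases "r x = l")
      case True then show ?thesis using x rin[OF lN] rl unfolding r'_def by simp
    next
      case False then show ?thesis using x rin unfolding r'_def by simp
    qed
  qed
  have injN': "inj_on r' (?N - {l})"
  proof (rule inj_onI)
    fix x y assume x: "x \<in> ?N - {l}" and y: "y \<in> ?N - {l}" and e: "r' x = r' y"
    show "x = y"
    proof (cases "r x = l"; cases "r y = l")
      assume "r x = l" "r y = l" then show ?thesis using inj x y inj_onD by fastforce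
    next
      assume a: "r x = l" "r y \<noteq> l"
      then have "r l = r y" using e unfolding r'_def by simp
      then have "l = y" using inj y lN inj_onD by fastforce
      then show ?thesis using y by simp
    next
      assume a: "r x \<noteq> l" "r y = l"
      then have "r x = r l" using e unfolding r'_def by simp
      then have "x = l" using inj x lN inj_onD by fastforce
      then show ?thesis using x by simp
    next
      assume a: "r x \<noteq> l" "r y \<noteq> l"
      then have "r x = r y" using e unfolding r'_def by simp
      then show ?thesis using inj x y inj_onD by fastforce
    qed
  qed
  have finN: "finite (?N - {l})" using nbrs_finite[OF sg] by simp
  have bij': "bij_betw r' (?N - {l}) (?N - {l})"
    by (rule bij_betw_imageI[OF injN' endo_inj_surj[OF finN N'sub injN']])
  have cyc': "\<exists>k. (r' ^^ k) x = w" if x: "x \<in> ?N - {l}" and w: "w \<in> ?N - {l}" for x w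
  proof -
    obtain k where k: "(r ^^ k) x = w" using rs_cyc[OF rs uV, of x w] x w unfolding r_def by blast
    obtain j where "(r' ^^ j) x = (if (r ^^ k) x = l then (r ^^ Suc k) x else (r ^^ k) x)"
      using rot_skip_cyc[of r l x k] rl x unfolding r'_def by blast
    then show ?thesis using k w by auto
  qed
  have rot'u: "(rot(u := (\<lambda>x. if rot u x = l then rot u l else rot u x))) u = r'"
    unfolding r'_def r_def by simp
  show ?thesis
    unfolding rotation_system_def
  proof (intro ballI conjI)
    fix v assume v: "v \<in> V - {l}"
    show "bij_betw ((rot(u := (\<lambda>x. if rot u x = l then rot u l else rot u x))) v) (nbrs (T - {{l, u}}) v) (nbrs (T - {{l, u}}) v)"
    proof (cases "v = u")
      case True then show ?thesis using bij' rot'u nbrs_remove_u[OF ul] by simp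
    next
      case False then show ?thesis using nbrs_remove_other[of v l u T] v rs_bij[OF rs, of v] by simp
    qed
    fix x w assume x: "x \<in> nbrs (T - {{l, u}}) v" and w: "w \<in> nbrs (T - {{l, u}}) v"
    show "\<exists>k. ((rot(u := (\<lambda>x. if rot u x = l then rot u l else rot u x))) v ^^ k) x = w"
    proof (cases "v = u")
      case True then show ?thesis using cyc' x w rot'u nbrs_remove_u[OF ul] by simp
    next
      case False then show ?thesis using nbrs_remove_other[of v l u T] v x w rs_cyc[OF rs, of v x w] by simp
    qed
  qed
qed



lemma orbit_lift:
  assumes sg: "simple_graph V T" and rs: "rotation_system V T rot"
    and lV: "l \<in> V" and l: "nbrs T l = {u}"
    and d: "d \<in> darts (T - {{l, u}})"
  shows "\<exists>m. (face_succ rot ^^ m) d = face_succ (rot(u := (\<lambda>x. if rot u x = l then rot u l else rot u x))) d"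
proof -
  let ?rot' = "rot(u := (\<lambda>x. if rot u x = l then rot u l else rot u x))"
  obtain x y where xy: "d = (x, y)" by fastforce
  have rlu: "rot l u = u"
  proof -
    have "u \<in> nbrs T l" using l by simp
    then have "rot l u \<in> nbrs T l" by (rule rs_in[OF rs lV])
    then show ?thesis using l by simp
  qed
  show ?thesis
  proof (cases "y = u \<and> rot u x = l")
    case True
    have "(face_succ rot ^^ 3) d = face_succ rot (face_succ rot (face_succ rot d))"
      by (simp add: numeral_3_eq_3)
    also have "\<dots> = (u, rot u l)" using True rlu unfolding xy face_succ_def by simp
    also have "\<dots> = face_succ ?rot' d" using True unfolding xy face_succ_def by simp
    finally show ?thesis by blast
  next
    case False
    have "(face_succ rot ^^ 1) d = face_succ ?rot' d" using False unfolding xy face_succ_def by auto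
    then show ?thesis by blast
  qed
qed

lemma darts_remove: "d \<in> darts T \<Longrightarrow> d \<notin> {(l, u), (u, l)} \<Longrightarrow> d \<in> darts (T - {{l, u}})"
  unfolding darts_def by (auto simp: doubleton_eq_iff)

theorem single_orbit:
  assumes "is_tree V T" "rotation_system V T rot" "d \<in> darts T" "d' \<in> darts T"
  shows "\<exists>k. (face_succ rot ^^ k) d = d'"
  using assms
proof (induction "card V" arbitrary: V T rot d d' rule: less_induct)
  case less
  have t: "is_tree V T" and rs: "rotation_system V T rot" using less.prems by auto
  have sg: "simple_graph V T" using t by (rule tree_sg)
  have finV: "finite V" using sg by (rule sg_finV)
  let ?f = "face_succ rot"
  obtain x0 y0 where "d = (x0, y0)" by fastforce
  then have "{x0, y0} \<in> T" using less.prems(3) unfolding darts_def by simp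
  then have "x0 \<noteq> y0" "x0 \<in> V" "y0 \<in> V" using sg_edge[OF sg] by auto
  then have s: "{x0, y0} \<subseteq> V" and c2': "card {x0, y0} = 2" by simp_all
  have c2: "card V \<ge> 2" using card_mono[OF finV s] c2' by simp
  have "card (leaves V T) \<ge> 2" by (rule tree_two_leaves[OF t c2])
  then obtain l where lL: "l \<in> leaves V T" by (metis all_not_in_conv card.empty not_numeral_le_zero)
  have lV: "l \<in> V" using lL unfolding leaves_def by blast
  obtain u where l: "nbrs T l = {u}" using leaf_nbr[OF sg lL] by blast
  have luT: "{l, u} \<in> T" using l nbr_edge by fastforce
  have uV: "u \<in> V" and ul: "u \<noteq> l" using sg_edge[OF sg luT] by auto
  have lu_u: "l \<in> nbrs T u" using luT by (simp add: nbrs_def insert_commute)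
  have rlu: "rot l u = u"
  proof -
    have "u \<in> nbrs T l" using l by simp
    then have "rot l u \<in> nbrs T l" by (rule rs_in[OF rs lV])
    then show ?thesis using l by simp
  qed
  have f_lu: "?f (u, l) = (l, u)" using rlu unfolding face_succ_def by simp
  show ?case
  proof (cases "nbrs T u = {l}")
    case True
    have ds: "darts T \<subseteq> {(l, u), (u, l)}"
    proof
      fix d assume dd: "d \<in> darts T"
      obtain x y where xy: "d = (x, y)" by fastforce
      have e: "{x, y} \<in> T" using dd unfolding xy darts_def by simp
      have "x \<in> V" using sg_edge[OF sg e] by blast
      then have "x \<in> {l, u}" using closure2[OF l True tree_conn[OF t lV]] by blast
      moreover have "y \<in> nbrs T x" using e by (simp add: nbrs_def)
      ultimately show "d \<in> {(l, u), (u, l)}" using l True xy by auto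
    qed
    have rul: "rot u l = l"
    proof -
      have "rot u l \<in> nbrs T u" by (rule rs_in[OF rs uV lu_u])
      then show ?thesis using True by simp
    qed
    have f_ul: "?f (l, u) = (u, l)" using rul unfolding face_succ_def by simp
    have "d \<in> {(l, u), (u, l)}" "d' \<in> {(l, u), (u, l)}" using ds less.prems by auto
    then show ?thesis
    proof (elim insertE emptyE)
      assume "d = (l, u)" "d' = (l, u)" then show ?thesis by (intro exI[of _ 0]) simp
    next
      assume "d = (l, u)" "d' = (u, l)" then show ?thesis using f_ul by (intro exI[of _ 1]) simp
    next
      assume "d = (u, l)" "d' = (l, u)" then show ?thesis using f_lu by (intro exI[of _ 1]) simp
    next
      assume "d = (u, l)" "d' = (u, l)" then show ?thesis by (intro exI[of _ 0]) simp
    qed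
  next
    case False
    then obtain p0 where p0: "p0 \<in> nbrs T u" "p0 \<noteq> l" using lu_u by blast
    define V' where "V' = V - {l}"
    define T' where "T' = T - {{l, u}}"
    define rot' where "rot' = rot(u := (\<lambda>x. if rot u x = l then rot u l else rot u x))"
    have t': "is_tree V' T'" unfolding V'_def T'_def by (rule remove_leaf_tree[OF t lV l c2])
    have rs': "rotation_system V' T' rot'" unfolding V'_def T'_def rot'_def
      by (rule remove_leaf_rot[OF rs sg lV l p0])
    have sg': "simple_graph V' T'" using t' by (rule tree_sg)
    have cV': "card V' < card V" unfolding V'_def using lV finV c2 by simp
    have IH: "\<exists>k. (face_succ rot' ^^ k) a = b" if "a \<in> darts T'" "b \<in> darts T'" for a b
      using less.hyps[OF cV' t' rs' that] .
    have lift1: "\<exists>m. (?f ^^ m) a = face_succ rot' a" if "a \<in> darts T'" for a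
      using orbit_lift[OF sg rs lV l, of a] that unfolding T'_def rot'_def by blast
    have liftk: "\<exists>m. (?f ^^ m) a = (face_succ rot' ^^ k) a" if a: "a \<in> darts T'" for a k
    proof (induction k)
      case 0 then show ?case by (intro exI[of _ 0]) simp
    next
      case (Suc k)
      then obtain m1 where m1: "(?f ^^ m1) a = (face_succ rot' ^^ k) a" by blast
      have "(face_succ rot' ^^ k) a \<in> darts T'" by (rule fs_iter_darts[OF sg' rs' a])
      then obtain m2 where m2: "(?f ^^ m2) ((face_succ rot' ^^ k) a) = face_succ rot' ((face_succ rot' ^^ k) a)"
        using lift1 by blast
      have "(?f ^^ (m2 + m1)) a = (face_succ rot' ^^ Suc k) a"
        using reach_comp[OF m1 m2] by simp
      then show ?case by blast
    qed
    have reachT': "\<exists>m. (?f ^^ m) a = b" if "a \<in> darts T'" "b \<in> darts T'" for a b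
      using IH[OF that] liftk[OF that(1)] by blast
    define q where "q = rot u l"
    have qN: "q \<in> nbrs T u" unfolding q_def by (rule rs_in[OF rs uV lu_u])
    have ql: "q \<noteq> l"
    proof
      assume a: "q = l"
      obtain k where k: "(rot u ^^ k) l = p0" using rs_cyc[OF rs uV lu_u p0(1)] by blast
      have "(rot u ^^ k) l = l" for k by (induction k) (simp_all add: a[unfolded q_def])
      then show False using k p0(2) by simp
    qed
    have uqT': "(u, q) \<in> darts T'" unfolding T'_def
      using qN ql ul by (intro darts_remove) (auto simp: darts_def nbrs_def)
    have f_luq: "?f (l, u) = (u, q)" unfolding face_succ_def q_def by simp
    obtain p where p: "p \<in> nbrs T u" "rot u p = l"
      using rs_bij[OF rs uV] lu_u by (metis bij_betw_imp_surj_on imageE)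
    have pl: "p \<noteq> l" using p ql unfolding q_def by auto
    have puT': "(p, u) \<in> darts T'" unfolding T'_def
      using p pl ul by (intro darts_remove) (auto simp: darts_def nbrs_def insert_commute)
    have f_pu: "?f (p, u) = (u, l)" unfolding face_succ_def using p by simp
    have enter: "\<exists>a e. (?f ^^ a) d = e \<and> e \<in> darts T'"
    proof (cases "d \<in> {(l, u), (u, l)}")
      case True
      then show ?thesis
      proof (elim insertE emptyE)
        assume "d = (l, u)" then show ?thesis using f_luq uqT' by (intro exI[of _ 1]) auto
      next
        assume "d = (u, l)" then have "(?f ^^ 2) d = (u, q)" using f_lu f_luq by (simp add: numeral_2_eq_2)
        then show ?thesis using uqT' by blast
      qed
    next
      case False then show ?thesis using darts_remove[OF less.prems(3) False] unfolding T'_def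
        by (intro exI[of _ 0]) auto
    qed
    have leave: "\<exists>b e. (?f ^^ b) e = d' \<and> e \<in> darts T'"
    proof (cases "d' \<in> {(l, u), (u, l)}")
      case True
      then show ?thesis
      proof (elim insertE emptyE)
        assume "d' = (u, l)" then show ?thesis using f_pu puT' by (intro exI[of _ 1]) auto
      next
        assume "d' = (l, u)" then have "(?f ^^ 2) (p, u) = d'" using f_lu f_pu by (simp add: numeral_2_eq_2)
        then show ?thesis using puT' by blast
      qed
    next
      case False then show ?thesis using darts_remove[OF less.prems(4) False] unfolding T'_def
        by (intro exI[of _ 0]) auto
    qed
    obtain a e1 where a: "(?f ^^ a) d = e1" "e1 \<in> darts T'" using enter by blast
    obtain b e2 where b: "(?f ^^ b) e2 = d'" "e2 \<in> darts T'" using leave by blast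
    obtain m where m: "(?f ^^ m) e1 = e2" using reachT'[OF a(2) b(2)] by blast
    show ?thesis using reach_comp[OF reach_comp[OF a(1) m] b(1)] by blast
  qed
qed



definition nb :: "'a set set \<Rightarrow> 'a \<Rightarrow> 'a" where
  "nb T l = the_elem (nbrs T l)"

definition sig :: "'a set \<Rightarrow> 'a set set \<Rightarrow> ('a \<Rightarrow> 'a \<Rightarrow> 'a) \<Rightarrow> 'a \<Rightarrow> 'a" where
  "sig V T rot l = (THE m. next_leaf V T rot l m)"

lemma halin_tree_t: "halin_tree V T rot \<Longrightarrow> is_tree V T"
  unfolding halin_tree_def by (elim conjE)
lemma halin_tree_rs: "halin_tree V T rot \<Longrightarrow> rotation_system V T rot"
  unfolding halin_tree_def by (elim conjE)

lemma leaf_nb: "simple_graph V T \<Longrightarrow> l \<in> leaves V T \<Longrightarrow> nbrs T l = {nb T l}"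
proof -
  assume a: "simple_graph V T" "l \<in> leaves V T"
  obtain u where u: "nbrs T l = {u}" using leaf_nbr[OF a] by blast
  then show ?thesis unfolding nb_def by simp
qed

lemma leavesV: "leaves V T \<subseteq> V" unfolding leaves_def by blast
lemma leafV: "l \<in> leaves V T \<Longrightarrow> l \<in> V" unfolding leaves_def by simp

lemma halin_card_V: "halin_tree V T rot \<Longrightarrow> card V \<ge> 3"
proof -
  assume h: "halin_tree V T rot"
  have "finite V" using sg_finV[OF tree_sg[OF halin_tree_t[OF h]]] .
  then have "card (leaves V T) \<le> card V" using card_mono[OF _ leavesV] by blast
  then show ?thesis using halin_three_leaves[OF h] by linarith
qed

lemma leaf_nb_internal:
  assumes h: "halin_tree V T rot" and lL: "l \<in> leaves V T"
  shows "nb T l \<notin> leaves V T"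
proof
  assume uL: "nb T l \<in> leaves V T"
  have t: "is_tree V T" using h by (rule halin_tree_t)
  have sg: "simple_graph V T" using t by (rule tree_sg)
  let ?u = "nb T l"
  have l: "nbrs T l = {?u}" by (rule leaf_nb[OF sg lL])
  have u: "nbrs T ?u = {nb T ?u}" by (rule leaf_nb[OF sg uL])
  have "?u \<in> nbrs T l" using l by simp
  then have "l \<in> nbrs T ?u" by (rule nbrs_sym[THEN iffD1])
  then have "l \<in> {nb T ?u}" using u by (simp only:)
  then have e: "nb T ?u = l" by (rule singletonD[symmetric])
  have u': "nbrs T ?u = {l}" using u unfolding e .
  have lV: "l \<in> V" using lL by (rule leafV)
  have "V \<subseteq> {l, ?u}"
  proof
    fix x assume "x \<in> V"
    then show "x \<in> {l, ?u}" using closure2[OF l u' tree_conn[OF t lV]] by blast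
  qed
  moreover have "card {l, ?u} \<le> 2" by (simp add: card_insert_if)
  ultimately have "card V \<le> 2" using card_mono[of "{l, ?u}" V] by simp
  then show False using halin_card_V[OF h] by simp
qed

lemma next_leaf_unique:
  assumes "next_leaf V T rot l m1" "next_leaf V T rot l m2" shows "m1 = m2"
proof -
  obtain u1 k1 where 1: "nbrs T l = {u1}" "snd ((face_succ rot ^^ k1) (l, u1)) = m1" "m1 \<in> leaves V T"
     "\<forall>j<k1. snd ((face_succ rot ^^ j) (l, u1)) \<notin> leaves V T" using assms(1) unfolding next_leaf_def by blast
  obtain u2 k2 where 2: "nbrs T l = {u2}" "snd ((face_succ rot ^^ k2) (l, u2)) = m2" "m2 \<in> leaves V T"
     "\<forall>j<k2. snd ((face_succ rot ^^ j) (l, u2)) \<notin> leaves V T" using assms(2) unfolding next_leaf_def by blast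
  have u: "u1 = u2" using 1(1) 2(1) by simp
  have "\<not> k1 < k2" using 1(2,3) 2(4) u by auto
  moreover have "\<not> k2 < k1" using 2(2,3) 1(4) u by auto
  ultimately have "k1 = k2" by simp
  then show ?thesis using 1 2 u by simp
qed

lemma next_leaf_exists:
  assumes h: "halin_tree V T rot" and lL: "l \<in> leaves V T"
  shows "\<exists>m. next_leaf V T rot l m"
proof -
  have t: "is_tree V T" using h by (rule halin_tree_t)
  have rs: "rotation_system V T rot" using h by (rule halin_tree_rs)
  have sg: "simple_graph V T" using t by (rule tree_sg)
  let ?f = "face_succ rot"
  have "leaves V T - {l} \<noteq> {}"
  proof
    assume "leaves V T - {l} = {}"
    then have "leaves V T \<subseteq> {l}" by (simp only: Diff_eq_empty_iff)
    then have "card (leaves V T) \<le> 1" using card_mono[of "{l}" "leaves V T"] by simp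
    then show False using halin_three_leaves[OF h] by simp
  qed
  then obtain m where "m \<in> leaves V T - {l}" by (meson ex_in_conv)
  then have mL: "m \<in> leaves V T" by simp
  have d1: "(l, nb T l) \<in> darts T" using leaf_nb[OF sg lL] unfolding darts_def nbrs_def by auto
  have d2: "(nb T m, m) \<in> darts T" using leaf_nb[OF sg mL] unfolding darts_def nbrs_def
    by (auto simp: insert_commute)
  obtain k where "(?f ^^ k) (l, nb T l) = (nb T m, m)" using single_orbit[OF t rs d1 d2] by blast
  then have ex: "snd ((?f ^^ k) (l, nb T l)) \<in> leaves V T" using mL by simp
  define k0 where "k0 = (LEAST k. snd ((?f ^^ k) (l, nb T l)) \<in> leaves V T)"
  have k0: "snd ((?f ^^ k0) (l, nb T l)) \<in> leaves V T" unfolding k0_def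
    by (rule LeastI[where P="\<lambda>k. snd ((?f ^^ k) (l, nb T l)) \<in> leaves V T", OF ex])
  have k0m: "\<forall>j<k0. snd ((?f ^^ j) (l, nb T l)) \<notin> leaves V T"
  proof (intro allI impI)
    fix j assume "j < k0"
    then show "snd ((?f ^^ j) (l, nb T l)) \<notin> leaves V T" unfolding k0_def by (rule not_less_Least)
  qed
  have "next_leaf V T rot l (snd ((?f ^^ k0) (l, nb T l)))" unfolding next_leaf_def
    apply (rule conjI[OF lL])
    apply (rule exI[of _ "nb T l"], rule exI[of _ k0])
    using leaf_nb[OF sg lL] k0 k0m by simp
  then show ?thesis by (rule exI)
qed

lemma sig_next:
  assumes h: "halin_tree V T rot" and lL: "l \<in> leaves V T"
  shows "next_leaf V T rot l (sig V T rot l)"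
proof -
  obtain m where m: "next_leaf V T rot l m" using next_leaf_exists[OF h lL] by blast
  have "sig V T rot l = m" unfolding sig_def
    by (rule the_equality[where P="next_leaf V T rot l", OF m]) (rule next_leaf_unique[OF _ m])
  then show ?thesis using m by simp
qed

lemma next_leaf_L: assumes "next_leaf V T rot l m" shows "l \<in> leaves V T" "m \<in> leaves V T"
  using assms unfolding next_leaf_def by auto

lemma sig_L: "halin_tree V T rot \<Longrightarrow> l \<in> leaves V T \<Longrightarrow> sig V T rot l \<in> leaves V T"
  by (rule next_leaf_L(2)[OF sig_next])

lemma next_leaf_iff:
  assumes h: "halin_tree V T rot"
  shows "next_leaf V T rot l m \<longleftrightarrow> l \<in> leaves V T \<and> m = sig V T rot l"
proof
  assume a: "next_leaf V T rot l m"
  then have lL: "l \<in> leaves V T" by (rule next_leaf_L(1))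
  show "l \<in> leaves V T \<and> m = sig V T rot l" using lL next_leaf_unique[OF a sig_next[OF h lL]] by simp
next
  assume "l \<in> leaves V T \<and> m = sig V T rot l"
  then show "next_leaf V T rot l m" using sig_next[OF h] by simp
qed

lemma sig_cycle_aux:
  assumes h: "halin_tree V T rot" and mL: "m \<in> leaves V T"
  shows "\<forall>l\<in>leaves V T. (face_succ rot ^^ k) (l, nb T l) = (nb T m, m) \<longrightarrow> (\<exists>j. (sig V T rot ^^ j) l = m)"
proof (induction k rule: less_induct)
  case (less k)
  have t: "is_tree V T" using h by (rule halin_tree_t)
  have rs: "rotation_system V T rot" using h by (rule halin_tree_rs)
  have sg: "simple_graph V T" using t by (rule tree_sg)
  let ?f = "face_succ rot"
  let ?s = "sig V T rot"
  show ?case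
  proof (intro ballI impI)
    fix l assume lL: "l \<in> leaves V T" and fk: "(?f ^^ k) (l, nb T l) = (nb T m, m)"
    obtain u k0 where k0: "nbrs T l = {u}" "snd ((?f ^^ k0) (l, u)) = ?s l"
      "\<forall>j<k0. snd ((?f ^^ j) (l, u)) \<notin> leaves V T"
      using sig_next[OF h lL] unfolding next_leaf_def by blast
    have u: "u = nb T l" using k0(1) leaf_nb[OF sg lL] by simp
    have "\<not> k < k0"
    proof
      assume "k < k0"
      then have "snd ((?f ^^ k) (l, u)) \<notin> leaves V T" using k0(3) by blast
      then show False using fk mL u by simp
    qed
    then have kk: "k0 \<le> k" by simp
    show "\<exists>j. (?s ^^ j) l = m"
    proof (cases "k = k0")
      case True
      then have "?s l = m" using k0(2) fk u by simp
      then show ?thesis by (intro exI[of _ 1]) simp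
    next
      case False
      then have kk: "k0 < k" using kk by simp
      have sL: "?s l \<in> leaves V T" by (rule sig_L[OF h lL])
      have dl: "(l, u) \<in> darts T" using k0(1) unfolding darts_def nbrs_def by auto
      obtain x where x: "(?f ^^ k0) (l, u) = (x, ?s l)" using k0(2) by (metis prod.collapse)
      have "(x, ?s l) \<in> darts T" using fs_iter_darts[OF sg rs dl, of k0] x by simp
      then have "x \<in> nbrs T (?s l)" unfolding darts_def nbrs_def by (simp add: insert_commute)
      then have "x = nb T (?s l)" using leaf_nb[OF sg sL] by simp
      have sV: "?s l \<in> V" using sL by (rule leafV)
      have "rot (?s l) x \<in> nbrs T (?s l)" by (rule rs_in[OF rs sV \<open>x \<in> nbrs T (?s l)\<close>])
      then have "rot (?s l) x = nb T (?s l)" using leaf_nb[OF sg sL] by simp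
      then have fs: "(?f ^^ Suc k0) (l, u) = (?s l, nb T (?s l))" using x by (simp add: face_succ_def)
      have "(?f ^^ (k - Suc k0)) (?s l, nb T (?s l)) = (?f ^^ (k - Suc k0 + Suc k0)) (l, u)"
        by (simp only: funpow_add o_apply fs)
      also have "\<dots> = (nb T m, m)" using kk fk u by simp
      finally have "\<exists>j. (?s ^^ j) (?s l) = m" using less.IH[of "k - Suc k0"] kk sL by simp
      then obtain j where "(?s ^^ j) (?s l) = m" by blast
      then have "(?s ^^ Suc j) l = m" by (simp add: funpow_Suc_right del: funpow.simps)
      then show ?thesis by blast
    qed
  qed
qed

lemma sig_cycle:
  assumes h: "halin_tree V T rot" and lL: "l \<in> leaves V T" and mL: "m \<in> leaves V T"
  shows "\<exists>j. (sig V T rot ^^ j) l = m"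
proof -
  have t: "is_tree V T" using h by (rule halin_tree_t)
  have rs: "rotation_system V T rot" using h by (rule halin_tree_rs)
  have sg: "simple_graph V T" using t by (rule tree_sg)
  have d1: "(l, nb T l) \<in> darts T" using leaf_nb[OF sg lL] unfolding darts_def nbrs_def by auto
  have d2: "(nb T m, m) \<in> darts T" using leaf_nb[OF sg mL] unfolding darts_def nbrs_def
    by (auto simp: insert_commute)
  obtain k where "(face_succ rot ^^ k) (l, nb T l) = (nb T m, m)" using single_orbit[OF t rs d1 d2] by blast
  then show ?thesis using sig_cycle_aux[OF h mL, of k] lL by blast
qed



lemma sig_iter_L: "halin_tree V T rot \<Longrightarrow> l \<in> leaves V T \<Longrightarrow> (sig V T rot ^^ j) l \<in> leaves V T"
  by (induction j) (simp_all add: sig_L)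

lemma other_leaf:
  assumes h: "halin_tree V T rot" and that: "card A \<le> 2" "finite A"
  shows "\<exists>m. m \<in> leaves V T \<and> m \<notin> A"
proof (rule ccontr)
  assume "\<not> (\<exists>m. m \<in> leaves V T \<and> m \<notin> A)"
  then have "leaves V T \<subseteq> A" by auto
  then have "card (leaves V T) \<le> card A" using card_mono[OF that(2)] by simp
  then show False using halin_three_leaves[OF h] that(1) by simp
qed

lemma sig_ne:
  assumes h: "halin_tree V T rot" and lL: "l \<in> leaves V T"
  shows "sig V T rot l \<noteq> l"
proof
  assume a: "sig V T rot l = l"
  have it: "(sig V T rot ^^ j) l = l" for j by (induction j) (simp_all add: a)
  obtain m where m: "m \<in> leaves V T" "m \<notin> {l}" using other_leaf[OF h, of "{l}"] by auto
  obtain j where "(sig V T rot ^^ j) l = m" using sig_cycle[OF h lL m(1)] by blast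
  then show False using it m(2) by simp
qed

lemma sig_ne2:
  assumes h: "halin_tree V T rot" and lL: "l \<in> leaves V T"
  shows "sig V T rot (sig V T rot l) \<noteq> l"
proof
  let ?s = "sig V T rot"
  assume a: "?s (?s l) = l"
  have it: "(?s ^^ j) l \<in> {l, ?s l}" for j
  proof (induction j)
    case 0 then show ?case by simp
  next
    case (Suc j) then show ?case using a by auto
  qed
  have "card {l, ?s l} \<le> 2" by (simp add: card_insert_if)
  then obtain m where m: "m \<in> leaves V T" "m \<notin> {l, ?s l}" using other_leaf[OF h, of "{l, ?s l}"] by auto
  obtain j where "(?s ^^ j) l = m" using sig_cycle[OF h lL m(1)] by blast
  then show False using it m(2) by metis
qed

lemma sig_surj:
  assumes h: "halin_tree V T rot"
  shows "sig V T rot ` leaves V T = leaves V T"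
proof
  show "sig V T rot ` leaves V T \<subseteq> leaves V T" using sig_L[OF h] by auto
next
  let ?s = "sig V T rot"
  show "leaves V T \<subseteq> ?s ` leaves V T"
  proof
    fix m assume mL: "m \<in> leaves V T"
    obtain l where l: "l \<in> leaves V T" "l \<notin> {m}" using other_leaf[OF h, of "{m}"] by auto
    obtain j where j: "(?s ^^ j) l = m" using sig_cycle[OF h l(1) mL] by blast
    have "j \<noteq> 0" using j l(2) by (cases j) auto
    then obtain i where i: "j = Suc i" by (cases j) auto
    have "m = ?s ((?s ^^ i) l)" using j i by simp
    moreover have "(?s ^^ i) l \<in> leaves V T" by (rule sig_iter_L[OF h l(1)])
    ultimately show "m \<in> ?s ` leaves V T" by blast
  qed
qed

lemma finite_leaves: "halin_tree V T rot \<Longrightarrow> finite (leaves V T)"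
  using finite_subset[OF leavesV sg_finV[OF tree_sg[OF halin_tree_t]]] by blast

lemma sig_inj:
  assumes h: "halin_tree V T rot"
  shows "inj_on (sig V T rot) (leaves V T)"
  by (rule eq_card_imp_inj_on[OF finite_leaves[OF h]]) (simp add: sig_surj[OF h])

lemma tree_orient:
  assumes "is_tree V T" "r \<in> V"
  shows "\<exists>D (\<phi>::'a \<Rightarrow> nat). orientation V T D \<and> (\<forall>v. outdeg D v \<le> 1) \<and>
           (\<forall>v\<in>V - {r}. outdeg D v = 1) \<and> (\<forall>(x, y)\<in>D. \<phi> y < \<phi> x)"
  using assms
proof (induction "card V" arbitrary: V T rule: less_induct)
  case less
  have t: "is_tree V T" and rV: "r \<in> V" using less.prems by auto
  have sg: "simple_graph V T" using t by (rule tree_sg)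
  have finV: "finite V" using sg by (rule sg_finV)
  show ?case
  proof (cases "card V \<ge> 2")
    case False
    have "card V > 0" using rV finV by (auto simp: card_gt_0_iff)
    then have "card V = 1" using False by linarith
    then have "card T = 0" using t unfolding is_tree_def by simp
    then have T0: "T = {}" using sg_finite_E[OF sg] by simp
    have V1: "V = {r}" using \<open>card V = 1\<close> rV by (metis card_1_singletonE singletonD)
    have "orientation V T {}" unfolding orientation_def T0 by simp
    moreover have "\<forall>v. outdeg {} v \<le> 1" unfolding outdeg_def by simp
    moreover have "\<forall>v\<in>V - {r}. outdeg {} v = 1" using V1 by simp
    ultimately show ?thesis by blast
  next
    case True
    have "card (leaves V T) \<ge> 2" by (rule tree_two_leaves[OF t True])
    moreover have "finite (leaves V T)" using finite_subset[OF leavesV finV] .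
    moreover have "leaves V T - {r} \<noteq> {}"
    proof
      assume "leaves V T - {r} = {}"
      then have "leaves V T \<subseteq> {r}" by (simp only: Diff_eq_empty_iff)
      then have "card (leaves V T) \<le> 1" using card_mono[of "{r}" "leaves V T"] by simp
      then show False using calculation by simp
    qed
    then obtain l where lL: "l \<in> leaves V T - {r}" by (meson ex_in_conv)
    have lL': "l \<in> leaves V T" and lr: "l \<noteq> r" using lL by auto
    have lV: "l \<in> V" using lL' by (rule leafV)
    obtain u where l: "nbrs T l = {u}" using leaf_nbr[OF sg lL'] by blast
    have luT: "{l, u} \<in> T" using l nbr_edge by fastforce
    have uV: "u \<in> V" and ul: "u \<noteq> l" using sg_edge[OF sg luT] by auto
    define V' where "V' = V - {l}"
    define T' where "T' = T - {{l, u}}"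
    have t': "is_tree V' T'" unfolding V'_def T'_def by (rule remove_leaf_tree[OF t lV l True])
    have sg': "simple_graph V' T'" using t' by (rule tree_sg)
    have cV': "card V' < card V" unfolding V'_def using lV finV True by simp
    have rV': "r \<in> V'" unfolding V'_def using rV lr by simp
    obtain D' and \<phi>' :: "'a \<Rightarrow> nat" where D': "orientation V' T' D'" "\<forall>v. outdeg D' v \<le> 1"
      "\<forall>v\<in>V' - {r}. outdeg D' v = 1" "\<forall>(x, y)\<in>D'. \<phi>' y < \<phi>' x"
      using less.hyps[OF cV' t' rV'] by blast
    have D'T': "{a, b} \<in> T'" if "(a, b) \<in> D'" for a b using D'(1) that unfolding orientation_def by blast
    have D'V: "a \<in> V' \<and> b \<in> V'" if "(a, b) \<in> D'" for a b using sg_edge[OF sg' D'T'[OF that]] by blast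
    have notl: "a \<noteq> l \<and> b \<noteq> l" if "(a, b) \<in> D'" for a b using D'V[OF that] unfolding V'_def by simp
    define D where "D = insert (l, u) D'"
    define \<phi> where "\<phi> = \<phi>'(l := \<phi>' u + 1)"
    have or: "orientation V T D"
      unfolding orientation_def
    proof (intro conjI allI impI)
      show "\<forall>(a, b)\<in>D. {a, b} \<in> T"
        unfolding D_def using luT D'T' unfolding T'_def by auto
    next
      fix a b assume ab: "{a, b} \<in> T"
      show "(a, b) \<in> D \<longleftrightarrow> (b, a) \<notin> D"
      proof (cases "{a, b} = {l, u}")
        case True
        then have "(a = l \<and> b = u) \<or> (a = u \<and> b = l)" by (simp add: doubleton_eq_iff)
        then show ?thesis unfolding D_def using notl ul by auto
      next
        case False
        then have abT': "{a, b} \<in> T'" using ab unfolding T'_def by simp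
        have "(a, b) \<noteq> (l, u)" "(b, a) \<noteq> (l, u)" using False by (auto simp: insert_commute)
        moreover have "(a, b) \<in> D' \<longleftrightarrow> (b, a) \<notin> D'" using D'(1) abT' unfolding orientation_def by blast
        ultimately show ?thesis unfolding D_def by auto
      qed
    qed
    have outl: "{w. (l, w) \<in> D} = {u}" unfolding D_def using notl by auto
    have outo: "{w. (v, w) \<in> D} = {w. (v, w) \<in> D'}" if "v \<noteq> l" for v unfolding D_def using that by auto
    have od1: "\<forall>v. outdeg D v \<le> 1"
    proof
      fix v show "outdeg D v \<le> 1"
        using outl outo[of v] D'(2) unfolding outdeg_def by (cases "v = l") auto
    qed
    have od2: "\<forall>v\<in>V - {r}. outdeg D v = 1"
    proof
      fix v assume v: "v \<in> V - {r}"
      show "outdeg D v = 1"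
      proof (cases "v = l")
        case True then show ?thesis using outl unfolding outdeg_def by simp
      next
        case False
        then have "v \<in> V' - {r}" using v unfolding V'_def by simp
        then show ?thesis using outo[OF False] D'(3) unfolding outdeg_def by simp
      qed
    qed
    have ph: "\<forall>(x, y)\<in>D. \<phi> y < \<phi> x"
    proof
      fix p assume p: "p \<in> D"
      obtain x y where xy: "p = (x, y)" by fastforce
      show "case p of (x, y) \<Rightarrow> \<phi> y < \<phi> x"
      proof (cases "p = (l, u)")
        case True then show ?thesis unfolding \<phi>_def using ul by simp
      next
        case False
        then have "(x, y) \<in> D'" using p xy unfolding D_def by auto
        then show ?thesis using notl D'(4) xy unfolding \<phi>_def by auto
      qed
    qed
    show ?thesis using or od1 od2 ph by blast
  qed
qed



lemma T_leaf_nb: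
  assumes h: "halin_tree V T rot" and e: "{a, b} \<in> T" and aL: "a \<in> leaves V T"
  shows "b = nb T a"
proof -
  have sg: "simple_graph V T" using tree_sg[OF halin_tree_t[OF h]] .
  have "b \<in> nbrs T a" using e by (simp add: nbrs_def)
  then show ?thesis using leaf_nb[OF sg aL] by simp
qed

lemma T_not_both:
  assumes h: "halin_tree V T rot" and e: "{a, b} \<in> T" and aL: "a \<in> leaves V T"
  shows "b \<notin> leaves V T"
  using T_leaf_nb[OF h e aL] leaf_nb_internal[OF h aL] by simp

lemma EC_eq:
  assumes h: "halin_tree V T rot"
  shows "outer_cycle_edges V T rot = (\<lambda>l. {l, sig V T rot l}) ` leaves V T"
  unfolding outer_cycle_edges_def next_leaf_iff[OF h] by auto

lemma EC_disj:
  assumes h: "halin_tree V T rot"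
  shows "T \<inter> outer_cycle_edges V T rot = {}"
proof (rule ccontr)
  assume "T \<inter> outer_cycle_edges V T rot \<noteq> {}"
  then obtain e where e: "e \<in> T" "e \<in> outer_cycle_edges V T rot" by blast
  then obtain l where l: "l \<in> leaves V T" "e = {l, sig V T rot l}" using EC_eq[OF h] by auto
  have "{l, sig V T rot l} \<in> T" using e l by simp
  then show False using T_not_both[OF h _ l(1)] sig_L[OF h l(1)] by simp
qed

lemma card_EC:
  assumes h: "halin_tree V T rot"
  shows "card (outer_cycle_edges V T rot) = card (leaves V T)"
proof -
  let ?s = "sig V T rot"
  have "inj_on (\<lambda>l. {l, ?s l}) (leaves V T)"
  proof (rule inj_onI)
    fix l m assume l: "l \<in> leaves V T" and m: "m \<in> leaves V T" and e: "{l, ?s l} = {m, ?s m}"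
    then have "(l = m \<and> ?s l = ?s m) \<or> (l = ?s m \<and> ?s l = m)" by (simp add: doubleton_eq_iff)
    then show "l = m" using sig_ne2[OF h m] by auto
  qed
  then show ?thesis unfolding EC_eq[OF h] by (rule card_image)
qed

lemma E_edge:
  assumes h: "halin_tree V T rot" and e: "e \<in> halin_edges V T rot"
  shows "\<exists>a b. e = {a, b} \<and> a \<noteq> b \<and> a \<in> V \<and> b \<in> V"
proof -
  have sg: "simple_graph V T" using tree_sg[OF halin_tree_t[OF h]] .
  show ?thesis
  proof (cases "e \<in> T")
    case True then show ?thesis using sg_edgeE[OF sg] by blast
  next
    case False
    then have "e \<in> outer_cycle_edges V T rot" using e unfolding halin_edges_def by simp
    then obtain l where l: "l \<in> leaves V T" "e = {l, sig V T rot l}" using EC_eq[OF h] by auto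
    have "l \<in> V" "sig V T rot l \<in> V" using leafV[OF l(1)] leafV[OF sig_L[OF h l(1)]] by auto
    then show ?thesis using l sig_ne[OF h l(1)] by blast
  qed
qed

lemma E_edge2:
  assumes h: "halin_tree V T rot" and e: "{a, b} \<in> halin_edges V T rot"
  shows "a \<in> V \<and> b \<in> V"
proof -
  obtain x y where "{a, b} = {x, y}" "x \<in> V" "y \<in> V" using E_edge[OF h e] by blast
  then show ?thesis by (auto simp: doubleton_eq_iff)
qed

lemma card_E:
  assumes h: "halin_tree V T rot"
  shows "card (halin_edges V T rot) = card V - 1 + card (leaves V T)"
proof -
  have t: "is_tree V T" by (rule halin_tree_t[OF h])
  have sg: "simple_graph V T" using tree_sg[OF t] .
  have fT: "finite T" by (rule sg_finite_E[OF sg])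
  have fC: "finite (outer_cycle_edges V T rot)" unfolding EC_eq[OF h] using finite_leaves[OF h] by simp
  have "card (halin_edges V T rot) = card T + card (outer_cycle_edges V T rot)"
    unfolding halin_edges_def by (rule card_Un_disjoint[OF fT fC EC_disj[OF h]])
  then show ?thesis using card_EC[OF h] t unfolding is_tree_def by simp
qed

lemma lower_bound:
  assumes h: "halin_tree V T rot" and o: "orientation V (halin_edges V T rot) D"
    and od: "\<forall>v\<in>V. outdeg D v \<le> 1"
  shows False
proof -
  let ?E = "halin_edges V T rot"
  have t: "is_tree V T" by (rule halin_tree_t[OF h])
  have finV: "finite V" using sg_finV[OF tree_sg[OF t]] .
  have DV: "D \<subseteq> V \<times> V"
  proof
    fix p assume p: "p \<in> D"
    obtain a b where ab: "p = (a, b)" by fastforce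
    have "{a, b} \<in> ?E" using o p ab unfolding orientation_def by auto
    then show "p \<in> V \<times> V" using E_edge2[OF h] ab by auto
  qed
  have finD: "finite D" using finite_subset[OF DV] finV by blast
  have Dsig: "D = Sigma V (\<lambda>v. {w. (v, w) \<in> D})" using DV by auto
  have "card D = (\<Sum>v\<in>V. card {w. (v, w) \<in> D})"
  proof -
    have "\<forall>v\<in>V. finite {w. (v, w) \<in> D}"
    proof
      fix v have "{w. (v, w) \<in> D} \<subseteq> V" using DV by auto
      then show "finite {w. (v, w) \<in> D}" using finV finite_subset by blast
    qed
    then show ?thesis by (subst Dsig) (rule card_SigmaI[OF finV])
  qed
  also have "\<dots> \<le> (\<Sum>v\<in>V. 1)" using od unfolding outdeg_def by (intro sum_mono) auto
  finally have cD: "card D \<le> card V" by simp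
  have "?E \<subseteq> (\<lambda>(a, b). {a, b}) ` D"
  proof
    fix e assume e: "e \<in> ?E"
    then obtain a b where ab: "e = {a, b}" using E_edge[OF h] by blast
    have "(a, b) \<in> D \<or> (b, a) \<in> D" using o e ab unfolding orientation_def by blast
    then show "e \<in> (\<lambda>(a, b). {a, b}) ` D"
    proof
      assume "(a, b) \<in> D" then show ?thesis using ab by force
    next
      assume "(b, a) \<in> D" then show ?thesis using ab by (force simp: insert_commute)
    qed
  qed
  then have "card ?E \<le> card D" by (rule surj_card_le[OF finD])
  moreover have "card ?E = card V - 1 + card (leaves V T)" by (rule card_E[OF h])
  moreover have "card (leaves V T) \<ge> 3" by (rule halin_three_leaves[OF h])
  ultimately show False using cD by linarith
qed

lemma euler_step:
  assumes fin: "finite S" and eu: "\<forall>v. indeg S v = outdeg S v" and xy: "(x, y) \<in> S"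
  shows "\<exists>z. (y, z) \<in> S"
proof -
  have "{w. (w, y) \<in> S} \<subseteq> fst ` S" by force
  then have "finite {w. (w, y) \<in> S}" using fin finite_subset by blast
  moreover have "x \<in> {w. (w, y) \<in> S}" using xy by simp
  ultimately have "indeg S y > 0" unfolding indeg_def by (auto simp: card_gt_0_iff)
  then have "outdeg S y > 0" using eu by simp
  then have "{z. (y, z) \<in> S} \<noteq> {}" unfolding outdeg_def by (metis card.empty less_irrefl)
  then show ?thesis by blast
qed



lemma upper_bound:
  assumes h: "halin_tree V T rot" and ev: "even (card (leaves V T))"
  shows "\<exists>D. orientation V (halin_edges V T rot) D \<and> (\<forall>v\<in>V. outdeg D v + 1 \<le> 3) \<and>
             even_eulerian D \<noteq> odd_eulerian D"
proof -
  let ?L = "leaves V T"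
  let ?s = "sig V T rot"
  let ?E = "halin_edges V T rot"
  have t: "is_tree V T" by (rule halin_tree_t[OF h])
  have sg: "simple_graph V T" using tree_sg[OF t] .
  have finV: "finite V" using sg_finV[OF sg] .
  have finL: "finite ?L" by (rule finite_leaves[OF h])
  have "?L \<noteq> {}" using halin_three_leaves[OF h] by auto
  then obtain l0 where l0: "l0 \<in> ?L" by (meson ex_in_conv)
  define r where "r = nb T l0"
  have rV: "r \<in> V"
  proof -
    have "r \<in> nbrs T l0" unfolding r_def using leaf_nb[OF sg l0] by simp
    then show ?thesis using nbrs_sub[OF sg] by blast
  qed
  have rL: "r \<notin> ?L" unfolding r_def by (rule leaf_nb_internal[OF h l0])
  obtain DT and \<phi> :: "'a \<Rightarrow> nat" where DT: "orientation V T DT" "\<forall>v. outdeg DT v \<le> 1"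
    "\<forall>v\<in>V - {r}. outdeg DT v = 1" "\<forall>(x, y)\<in>DT. \<phi> y < \<phi> x"
    using tree_orient[OF t rV] by blast
  have DT_T: "{a, b} \<in> T" if "(a, b) \<in> DT" for a b using DT(1) that unfolding orientation_def by blast
  have DT_or: "(a, b) \<in> DT \<longleftrightarrow> (b, a) \<notin> DT" if "{a, b} \<in> T" for a b
    using DT(1) that unfolding orientation_def by blast
  have DT_out: "(l, nb T l) \<in> DT" if lL: "l \<in> ?L" for l
  proof -
    have "l \<in> V - {r}" using leafV[OF lL] rL lL by auto
    then have c1: "card {w. (l, w) \<in> DT} = 1" using DT(3) unfolding outdeg_def by simp
    have "{w. (l, w) \<in> DT} \<subseteq> {nb T l}"
    proof
      fix w assume "w \<in> {w. (l, w) \<in> DT}"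
      then have "{l, w} \<in> T" using DT_T by simp
      then show "w \<in> {nb T l}" using T_leaf_nb[OF h _ lL] by simp
    qed
    then show ?thesis using c1 by (metis card.empty subset_singletonD zero_neq_one singletonI mem_Collect_eq)
  qed
  have DT_noin: "y \<notin> ?L" if xy: "(x, y) \<in> DT" for x y
  proof
    assume yL: "y \<in> ?L"
    have e: "{x, y} \<in> T" using DT_T[OF xy] .
    then have e': "{y, x} \<in> T" by (simp add: insert_commute)
    have "x = nb T y" using T_leaf_nb[OF h e' yL] .
    then have "(y, x) \<in> DT" using DT_out[OF yL] by simp
    then show False using DT_or[OF e'] xy by simp
  qed
  define DC where "DC = (\<lambda>l. (l, ?s l)) ` ?L"
  have DC_iff: "(a, b) \<in> DC \<longleftrightarrow> a \<in> ?L \<and> b = ?s a" for a b unfolding DC_def by auto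
  define D where "D = DT \<union> DC"
  have EC: "outer_cycle_edges V T rot = (\<lambda>l. {l, ?s l}) ` ?L" by (rule EC_eq[OF h])
  have orD: "orientation V ?E D"
    unfolding orientation_def
  proof (intro conjI allI impI)
    show "\<forall>(a, b)\<in>D. {a, b} \<in> ?E"
    proof
      fix p assume p: "p \<in> D"
      obtain a b where ab: "p = (a, b)" by fastforce
      show "case p of (a, b) \<Rightarrow> {a, b} \<in> ?E"
      proof (cases "p \<in> DT")
        case True then show ?thesis using DT_T ab unfolding halin_edges_def by auto
      next
        case False then have "p \<in> DC" using p unfolding D_def by simp
        then have "a \<in> ?L" "b = ?s a" using DC_iff ab by auto
        then show ?thesis using ab unfolding halin_edges_def EC by auto
      qed
    qed
  next
    fix a b assume ab: "{a, b} \<in> ?E"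
    show "(a, b) \<in> D \<longleftrightarrow> (b, a) \<notin> D"
    proof (cases "{a, b} \<in> T")
      case True
      have n1: "(a, b) \<notin> DC"
      proof
        assume "(a, b) \<in> DC"
        then have "a \<in> ?L" "b = ?s a" using DC_iff by auto
        then show False using T_not_both[OF h True] sig_L[OF h] by auto
      qed
      have n2: "(b, a) \<notin> DC"
      proof
        assume "(b, a) \<in> DC"
        then have "b \<in> ?L" "a = ?s b" using DC_iff by auto
        moreover have "{b, a} \<in> T" using True by (simp add: insert_commute)
        ultimately show False using T_not_both[OF h] sig_L[OF h] by auto
      qed
      show ?thesis using n1 n2 DT_or[OF True] unfolding D_def by auto
    next
      case False
      then have "{a, b} \<in> outer_cycle_edges V T rot" using ab unfolding halin_edges_def by simp
      then obtain l where l: "l \<in> ?L" "{a, b} = {l, ?s l}" unfolding EC by auto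
      have sl: "?s l \<in> ?L" by (rule sig_L[OF h l(1)])
      have ss: "?s (?s l) \<noteq> l" by (rule sig_ne2[OF h l(1)])
      have "(a = l \<and> b = ?s l) \<or> (a = ?s l \<and> b = l)" using l(2) by (simp add: doubleton_eq_iff)
      then have "a \<in> ?L \<and> b \<in> ?L" using l(1) sl by auto
      then have nT: "(a, b) \<notin> DT" "(b, a) \<notin> DT" using DT_noin by auto
      have "(a, b) \<in> DC \<longleftrightarrow> (b, a) \<notin> DC"
        using \<open>(a = l \<and> b = ?s l) \<or> (a = ?s l \<and> b = l)\<close> DC_iff l(1) sl ss by auto
      then show ?thesis using nT unfolding D_def by auto
    qed
  qed
  have odD: "\<forall>v\<in>V. outdeg D v + 1 \<le> 3"
  proof
    fix v assume "v \<in> V"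
    have "{w. (v, w) \<in> D} = {w. (v, w) \<in> DT} \<union> {w. (v, w) \<in> DC}" unfolding D_def by auto
    then have "outdeg D v \<le> outdeg DT v + card {w. (v, w) \<in> DC}"
      unfolding outdeg_def by (simp add: card_Un_le)
    moreover have "card {w. (v, w) \<in> DC} \<le> 1"
    proof -
      have "{w. (v, w) \<in> DC} \<subseteq> {?s v}" using DC_iff by auto
      then show ?thesis using card_mono[of "{?s v}"] by fastforce
    qed
    moreover have "outdeg DT v \<le> 1" using DT(2) by blast
    ultimately show "outdeg D v + 1 \<le> 3" by linarith
  qed
  have DV: "D \<subseteq> V \<times> V"
  proof
    fix p assume p: "p \<in> D"
    obtain a b where ab: "p = (a, b)" by fastforce
    have "{a, b} \<in> ?E" using orD p ab unfolding orientation_def by auto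
    then show "p \<in> V \<times> V" using E_edge2[OF h] ab by auto
  qed
  have finD: "finite D" using finite_subset[OF DV] finV by blast
  have sinj: "inj_on ?s ?L" by (rule sig_inj[OF h])
  have ssurj: "?s ` ?L = ?L" by (rule sig_surj[OF h])
  have DC_eu: "eulerian_sub D DC"
    unfolding eulerian_sub_def
  proof (intro conjI allI)
    show "DC \<subseteq> D" unfolding D_def by blast
  next
    fix v
    show "indeg DC v = outdeg DC v"
    proof (cases "v \<in> ?L")
      case True
      then obtain w0 where w0: "w0 \<in> ?L" "?s w0 = v" using ssurj by (metis imageE)
      have "{w. (w, v) \<in> DC} = {w0}"
      proof (intro set_eqI iffI)
        fix w assume "w \<in> {w. (w, v) \<in> DC}"
        then have "w \<in> ?L" "?s w = v" using DC_iff by auto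
        then show "w \<in> {w0}" using sinj w0 inj_onD by fastforce
      next
        fix w assume "w \<in> {w0}" then show "w \<in> {w. (w, v) \<in> DC}" using DC_iff w0 by simp
      qed
      moreover have "{w. (v, w) \<in> DC} = {?s v}" using DC_iff True by auto
      ultimately show ?thesis unfolding indeg_def outdeg_def by simp
    next
      case False
      have "{w. (w, v) \<in> DC} = {}" using DC_iff False sig_L[OF h] by auto
      moreover have "{w. (v, w) \<in> DC} = {}" using DC_iff False by auto
      ultimately show ?thesis unfolding indeg_def outdeg_def by simp
    qed
  qed
  have E_eu: "eulerian_sub D {}" unfolding eulerian_sub_def indeg_def outdeg_def by simp
  have only: "S = {} \<or> S = DC" if S: "eulerian_sub D S" for S
  proof -
    have SD: "S \<subseteq> D" and eu: "\<forall>v. indeg S v = outdeg S v" using S unfolding eulerian_sub_def by auto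
    have finS: "finite S" using finite_subset[OF SD finD] .
    have noT: "S \<inter> DT = {}"
    proof (rule ccontr)
      assume "S \<inter> DT \<noteq> {}"
      then obtain p where "p \<in> S \<inter> DT" by (meson ex_in_conv)
      then obtain q where q: "q \<in> S \<inter> DT" and qmin: "\<forall>q'. q' \<in> S \<inter> DT \<longrightarrow> \<phi> (snd q) \<le> \<phi> (snd q')"
        using ex_has_least_nat[of "\<lambda>q. q \<in> S \<inter> DT" p "\<lambda>q. \<phi> (snd q)"] by blast
      obtain x y where xy: "q = (x, y)" by fastforce
      obtain z where z: "(y, z) \<in> S" using euler_step[OF finS eu] q xy by blast
      have "(y, z) \<in> DT \<or> (y, z) \<in> DC" using z SD unfolding D_def by auto
      then show False
      proof
        assume yz: "(y, z) \<in> DT"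
        then have "\<phi> z < \<phi> y" using DT(4) by auto
        moreover have "\<phi> y \<le> \<phi> z" using qmin[rule_format, of "(y, z)"] z yz xy by simp
        ultimately show False by simp
      next
        assume "(y, z) \<in> DC"
        then have "y \<in> ?L" using DC_iff by simp
        moreover have "(x, y) \<in> DT" using q xy by simp
        then have "y \<notin> ?L" by (rule DT_noin)
        ultimately show False by simp
      qed
    qed
    have SDC: "S \<subseteq> DC" using SD noT unfolding D_def by auto
    show ?thesis
    proof (cases "S = {}")
      case True then show ?thesis by simp
    next
      case False
      then obtain p where p: "p \<in> S" by (meson ex_in_conv)
      then have "p \<in> DC" using SDC by auto
      then obtain l where l: "l \<in> ?L" "p = (l, ?s l)" unfolding DC_def by auto
      have it: "((?s ^^ j) l, ?s ((?s ^^ j) l)) \<in> S" for j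
      proof (induction j)
        case 0 then show ?case using p l by simp
      next
        case (Suc j)
        obtain z where z: "(?s ((?s ^^ j) l), z) \<in> S" using euler_step[OF finS eu Suc] by blast
        then have "z = ?s (?s ((?s ^^ j) l))" using SDC DC_iff by auto
        then show ?case using z by simp
      qed
      have "DC \<subseteq> S"
      proof
        fix p' assume "p' \<in> DC"
        then obtain m where m: "m \<in> ?L" "p' = (m, ?s m)" unfolding DC_def by auto
        obtain j where "(?s ^^ j) l = m" using sig_cycle[OF h l(1) m(1)] by blast
        then show "p' \<in> S" using it[of j] m by simp
      qed
      then show ?thesis using SDC by auto
    qed
  qed
  have cDC: "card DC = card ?L" unfolding DC_def by (rule card_image) (auto intro: inj_onI)
  have DCne: "DC \<noteq> {}" unfolding DC_def using l0 by auto
  have evs: "{S. eulerian_sub D S \<and> even (card S)} = {{}, DC}"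
    using only E_eu DC_eu cDC ev by auto
  have ods: "{S. eulerian_sub D S \<and> odd (card S)} = {}"
  proof -
    have "even (card S)" if "eulerian_sub D S" for S
      using only[OF that] cDC ev by (elim disjE) simp_all
    then show ?thesis by auto
  qed
  have "even_eulerian D = 2" unfolding even_eulerian_def evs using DCne by simp
  moreover have "odd_eulerian D = 0" unfolding odd_eulerian_def ods by simp
  ultimately have "even_eulerian D \<noteq> odd_eulerian D" by simp
  then show ?thesis using orD odD by blast
qed



theorem lemma3p4:
  fixes V :: "'a set" and T :: "'a set set" and rot :: "'a \<Rightarrow> 'a \<Rightarrow> 'a"
  assumes "halin_tree V T rot"
    and "even (card (leaves V T))"
  shows "AT_number V (halin_edges V T rot) = 3"
  unfolding AT_number_def
proof (rule Least_equality)
  show "\<exists>D. orientation V (halin_edges V T rot) D \<and> (\<forall>v\<in>V. outdeg D v + 1 \<le> 3) \<and>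
            even_eulerian D \<noteq> odd_eulerian D"
    by (rule upper_bound[OF assms])
next
  fix k assume "\<exists>D. orientation V (halin_edges V T rot) D \<and> (\<forall>v\<in>V. outdeg D v + 1 \<le> k) \<and>
            even_eulerian D \<noteq> odd_eulerian D"
  then obtain D where D: "orientation V (halin_edges V T rot) D" "\<forall>v\<in>V. outdeg D v + 1 \<le> k" by blast
  show "3 \<le> k"
  proof (rule ccontr)
    assume "\<not> 3 \<le> k"
    then have "\<forall>v\<in>V. outdeg D v \<le> 1" using D(2) by auto
    then show False using lower_bound[OF assms(1) D(1)] by blast
  qed
qed


end
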